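(* Let $n\geq 3$, $p,q>0$ with $pq>1$, $\alpha\in(0,n)$, $\sigma_1,\sigma_2\in[0,\alpha)$, with $q\geq p$ and $\sigma_1\geq\sigma_2$. Let $u,v$ be positive solutions of $$u(x)=\int_{\mathbb{R}^n}\frac{v(y)^q}{|x-y|^{n-\alpha}|y|^{\sigma_1}}\,dy,\qquad v(x)=\int_{\mathbb{R}^n}\frac{u(y)^p}{|x-y|^{n-\alpha}|y|^{\sigma_2}}\,dy,\qquad x\in\mathbb{R}^n,$$ satisfying $q_0+p_0\leq n-\alpha$. If $u,v$ are bounded and decay with the fast rates as $|x|\to\infty$, then $u,v$ are integrable solutions.
   Context: Define $$p_0=\frac{\alpha(1+p)-(\sigma_2+\sigma_1p)}{pq-1},\qquad q_0=\frac{\alpha(1+q)-(\sigma_1+\sigma_2q)}{pq-1},\qquad r_0=\frac{n}{q_0},\qquad s_0=\frac{n}{p_0}.$$ A positive solution $u,v$ is integrable if $u\in L^{r_0}(\mathbb{R}^n)$ and $v\in L^{s_0}(\mathbb{R}^n)$. The notation $f(x)\simeq g(x)$ means there exist constants $c,C>0$ with $cg(x)\leq f(x)\leq Cg(x)$ as $|x|\to\infty$. With $q\geq p$ and $\sigma_1\geq\sigma_2$, $u,v$ decay with the fast rates if $u(x)\simeq|x|^{-(n-\alpha)}$ and $v(x)\simeq|x|^{-(n-\alpha)}$ if $p(n-\alpha)+\sigma_2>n$; $v(x)\simeq|x|^{-(n-\alpha)}\ln|x|$ if $p(n-\alpha)+\sigma_2=n$; $v(x)\simeq|x|^{-(p(n-\alpha)-(\alpha-\sigma_2))}$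 if $p(n-\alpha)+\sigma_2<n$. *)

theory Defs
  imports "HOL-Analysis.Analysis"
begin

definition p0_exp :: "real \<Rightarrow> real \<Rightarrow> real \<Rightarrow> real \<Rightarrow> real \<Rightarrow> real" where
  "p0_exp \<alpha> p q \<sigma>1 \<sigma>2 = (\<alpha> * (1 + p) - (\<sigma>2 + \<sigma>1 * p)) / (p * q - 1)"

definition q0_exp :: "real \<Rightarrow> real \<Rightarrow> real \<Rightarrow> real \<Rightarrow> real \<Rightarrow> real" where
  "q0_exp \<alpha> p q \<sigma>1 \<sigma>2 = (\<alpha> * (1 + q) - (\<sigma>1 + \<sigma>2 * q)) / (p * q - 1)"

definition asymp_comparable :: "('a::real_normed_vector \<Rightarrow> real) \<Rightarrow> ('a \<Rightarrow> real) \<Rightarrow> bool" where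
  "asymp_comparable f g \<longleftrightarrow>
     (\<exists>c C R. c > 0 \<and> C > 0 \<and> (\<forall>x. norm x \<ge> R \<longrightarrow> c * g x \<le> f x \<and> f x \<le> C * g x))"

text \<open>Fast decay rates (for q \<ge> p, \<sigma>1 \<ge> \<sigma>2), n = DIM('a).\<close>
definition fast_decay :: "real \<Rightarrow> real \<Rightarrow> real \<Rightarrow> real \<Rightarrow>
    ('a::euclidean_space \<Rightarrow> real) \<Rightarrow> ('a \<Rightarrow> real) \<Rightarrow> bool" where
  "fast_decay \<alpha> p \<sigma>1 \<sigma>2 u v \<longleftrightarrow>
     (let n = real DIM('a) in
      asymp_comparable u (\<lambda>x. norm x powr (-(n - \<alpha>))) \<and>
      (if p * (n - \<alpha>) + \<sigma>2 > n then asymp_comparable v (\<lambda>x. norm x powr (-(n - \<alpha>)))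
       else if p * (n - \<alpha>) + \<sigma>2 = n then
         asymp_comparable v (\<lambda>x. norm x powr (-(n - \<alpha>)) * ln (norm x))
       else asymp_comparable v (\<lambda>x. norm x powr (-(p * (n - \<alpha>) - (\<alpha> - \<sigma>2))))))"

definition in_Lp :: "real \<Rightarrow> ('a::euclidean_space \<Rightarrow> real) \<Rightarrow> bool" where
  "in_Lp r f \<longleftrightarrow> f \<in> borel_measurable lborel \<and>
     (\<integral>\<^sup>+ x. ennreal (\<bar>f x\<bar> powr r) \<partial>lborel) < \<infinity>"

end

theory Submission imports Defs begin

lemma oneD_fin:
  fixes t :: real assumes t: "t > 1"
  shows "(\<integral>\<^sup>+x. ennreal ((1 + \<bar>x\<bar>) powr (-t)) \<partial>lborel) < \<infinity>"
proof -
  define g :: "real \<Rightarrow> ennreal" where "g x = ennreal (x powr (-t)) * indicator {1..} x" for x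
  have gm[measurable]: "g \<in> borel_measurable borel" unfolding g_def by measurable
  have gint: "integral\<^sup>N lborel g = ennreal (-(1 powr (-t+1)) / (-t+1))"
    unfolding g_def
    by (rule nn_integral_has_integral_lebesgue') (use has_integral_powr_to_inf[of "-t" 1] t in auto)
  have gsym: "(\<integral>\<^sup>+x. g (-x) \<partial>lborel) = integral\<^sup>N lborel g"
    using nn_integral_real_affine[OF gm, of "-1" 0] by simp
  have bound: "ennreal ((1 + \<bar>x\<bar>) powr (-t)) \<le> indicator {-1..1} x + g x + g (-x)" for x
  proof (cases "x \<ge> 1")
    case True
    have "(1 + \<bar>x\<bar>) powr (-t) \<le> x powr (-t)"
      using True t by (intro powr_mono2') auto
    then have "ennreal ((1 + \<bar>x\<bar>) powr (-t)) \<le> g x" using True by (simp add: g_def)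
    then show ?thesis by (simp add: add_increasing2 order_trans[OF _ add_increasing])
  next
    case False
    show ?thesis
    proof (cases "x \<le> -1")
      case True
      have "(1 + \<bar>x\<bar>) powr (-t) \<le> (-x) powr (-t)"
        using True t by (intro powr_mono2') auto
      then have "ennreal ((1 + \<bar>x\<bar>) powr (-t)) \<le> g (-x)" using True by (simp add: g_def)
      then show ?thesis by (simp add: add_increasing)
    next
      case F2: False
      have "(1 + \<bar>x\<bar>) powr (-t) \<le> 1"
        using t powr_mono2'[of "-t" 1 "1 + \<bar>x\<bar>"] by simp
      hence "ennreal ((1 + \<bar>x\<bar>) powr (-t)) \<le> indicator {-1..1} x" using False F2 by simp
      then show ?thesis by (simp add: add_increasing2 order_trans[OF _ add_increasing])
    qed
  qed
  have "(\<integral>\<^sup>+x. ennreal ((1 + \<bar>x\<bar>) powr (-t)) \<partial>lborel) \<le>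
        (\<integral>\<^sup>+x. (indicator {-1..1} x + g x + g (-x)) \<partial>lborel)"
    by (intro nn_integral_mono bound)
  also have "\<dots> = emeasure lborel {-1..1::real} + integral\<^sup>N lborel g + integral\<^sup>N lborel g"
    by (subst nn_integral_add; simp add: nn_integral_add gsym)
  also have "\<dots> < \<infinity>" by (simp add: gint)
  finally show ?thesis .
qed

lemma nD_fin:
  fixes h :: "'a::euclidean_space \<Rightarrow> real"
  assumes s: "s > real DIM('a)" and hm: "h \<in> borel_measurable lborel"
    and hb: "\<And>x. h x \<le> C * (1 + norm x) powr (-s)"
  shows "(\<integral>\<^sup>+x. ennreal (h x) \<partial>lborel) < \<infinity>"
proof -
  define t where "t = s / real DIM('a)"
  have t: "t > 1" using s by (simp add: t_def)
  have st: "s = t * real DIM('a)" by (simp add: t_def)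
  have prodfin: "(\<integral>\<^sup>+(x::'a). (\<Prod>b\<in>Basis. ennreal ((1 + \<bar>x \<bullet> b\<bar>) powr (-t))) \<partial>lborel) < \<infinity>"
    by (subst nn_integral_lborel_prod[where f="\<lambda>b y. ennreal ((1 + \<bar>y\<bar>) powr (-t))"])
       (use oneD_fin[OF t] in \<open>auto simp: power_less_top_ennreal\<close>)
  have pb: "h x \<le> max C 0 * (\<Prod>b\<in>Basis. (1 + \<bar>x \<bullet> b\<bar>) powr (-t))" for x
  proof -
    have "(1 + norm x) powr (-s) = (\<Prod>b\<in>(Basis::'a set). (1 + norm x) powr (-t))"
    proof -
      have nz: "1 + norm x \<noteq> 0" by (smt (verit) norm_ge_zero)
      have "((1 + norm x) powr (-t)) ^ DIM('a) = ((1 + norm x) powr (-t)) powr real DIM('a)"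
        by (rule powr_realpow[symmetric]) (use nz in simp)
      also have "\<dots> = (1 + norm x) powr (-s)" proof -
        have "1 + norm x \<noteq> 0" by (smt (verit) norm_ge_zero)
        then show ?thesis by (simp add: powr_powr st)
      qed
      finally show ?thesis by simp
    qed
    also have "\<dots> \<le> (\<Prod>b\<in>Basis. (1 + \<bar>x \<bullet> b\<bar>) powr (-t))"
      using t by (intro prod_mono conjI powr_mono2') (auto simp: Basis_le_norm)
    finally have "(1 + norm x) powr (-s) \<le> (\<Prod>b\<in>Basis. (1 + \<bar>x \<bullet> b\<bar>) powr (-t))" .
    then have "max C 0 * (1 + norm x) powr (-s) \<le> max C 0 * (\<Prod>b\<in>Basis. (1 + \<bar>x \<bullet> b\<bar>) powr (-t))"
      by (intro mult_left_mono) auto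
    moreover have "h x \<le> max C 0 * (1 + norm x) powr (-s)"
      using hb[of x] by (smt (verit) mult_right_mono powr_ge_zero)
    ultimately show ?thesis by linarith
  qed
  have "(\<integral>\<^sup>+x. ennreal (h x) \<partial>lborel) \<le>
      (\<integral>\<^sup>+(x::'a). ennreal (max C 0) * (\<Prod>b\<in>Basis. ennreal ((1 + \<bar>x \<bullet> b\<bar>) powr (-t))) \<partial>lborel)"
  proof (intro nn_integral_mono)
    fix x :: 'a
    have "ennreal (max C 0) * (\<Prod>b\<in>Basis. ennreal ((1 + \<bar>x \<bullet> b\<bar>) powr (-t)))
        = ennreal (max C 0 * (\<Prod>b\<in>Basis. (1 + \<bar>x \<bullet> b\<bar>) powr (-t)))"
      by (simp add: prod_ennreal ennreal_mult prod_nonneg)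
    then show "ennreal (h x) \<le> ennreal (max C 0) * (\<Prod>b\<in>Basis. ennreal ((1 + \<bar>x \<bullet> b\<bar>) powr (-t)))"
      using pb[of x] by (simp add: ennreal_leI)
  qed
  also have "\<dots> = ennreal (max C 0) * (\<integral>\<^sup>+(x::'a). (\<Prod>b\<in>Basis. ennreal ((1 + \<bar>x \<bullet> b\<bar>) powr (-t))) \<partial>lborel)"
    by (rule nn_integral_cmult) measurable
  also have "\<dots> < \<infinity>" using prodfin by (simp add: ennreal_mult_less_top)
  finally show ?thesis .
qed

lemma decay_Lp:
  fixes f :: "'a::euclidean_space \<Rightarrow> real"
  assumes fm: "f \<in> borel_measurable lborel" and pos: "\<And>x. f x > 0" and bd: "\<And>x. f x \<le> M"
    and r: "r > 0" and g: "\<gamma> > 0" and rg: "r * \<gamma> > real DIM('a)"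
    and dec: "\<And>x. norm x \<ge> R \<Longrightarrow> f x \<le> K * norm x powr (-\<gamma>)"
  shows "in_Lp r f"
proof -
  define e where "e = r * \<gamma>"
  have e: "e > 0" using r g by (simp add: e_def)
  define R' where "R' = max R 1"
  define C where "C = max (K powr r * 2 powr e) (M powr r * (1 + R') powr e)"
  have pb: "\<bar>f x\<bar> powr r \<le> C * (1 + norm x) powr (-e)" for x
  proof (cases "norm x \<ge> R'")
    case True
    have x1: "norm x \<ge> 1" and xR: "norm x \<ge> R" using True by (auto simp: R'_def)
    have fx: "0 < f x" "f x \<le> K * norm x powr (-\<gamma>)" using pos[of x] dec[OF xR] by auto
    have "\<bar>f x\<bar> powr r \<le> (K * norm x powr (-\<gamma>)) powr r"
      using fx r by (intro powr_mono2) auto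
    also have "\<dots> = K powr r * norm x powr (-e)"
    proof -
      have K0: "K \<ge> 0" using fx by (smt (verit) mult_nonpos_nonneg powr_ge_zero)
      show ?thesis using K0 x1 by (simp add: powr_mult powr_powr e_def mult.commute)
    qed
    also have "\<dots> \<le> K powr r * (2 powr e * (1 + norm x) powr (-e))"
    proof (rule mult_left_mono)
      have "(1 + norm x) powr e \<le> (2 * norm x) powr e"
        using x1 e by (intro powr_mono2) auto
      also have "\<dots> = 2 powr e * norm x powr e" by (simp add: powr_mult)
      finally have le: "(1 + norm x) powr e \<le> 2 powr e * norm x powr e" .
      have p1: "(1 + norm x) powr e > 0" "norm x powr e > 0" using x1 by auto
      show "norm x powr (-e) \<le> 2 powr e * (1 + norm x) powr (-e)"
        using le p1 by (simp add: powr_minus field_simps)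
    qed simp
    also have "\<dots> \<le> C * (1 + norm x) powr (-e)"
      unfolding C_def by (simp add: mult.assoc[symmetric] mult_right_mono)
    finally show ?thesis .
  next
    case False
    have "\<bar>f x\<bar> powr r \<le> M powr r"
      using pos[of x] bd[of x] r by (intro powr_mono2) auto
    also have "\<dots> \<le> M powr r * ((1 + R') powr e * (1 + norm x) powr (-e))"
    proof -
      have "(1 + norm x) powr e \<le> (1 + R') powr e"
        using False e by (intro powr_mono2) auto
      moreover have "(1 + norm x) powr e > 0" by (smt (verit) norm_ge_zero powr_gt_zero)
      ultimately have "1 \<le> (1 + R') powr e * (1 + norm x) powr (-e)"
        by (simp add: powr_minus field_simps)
      then show ?thesis by (simp add: mult_le_cancel_left1)
    qed
    also have "\<dots> \<le> C * (1 + norm x) powr (-e)"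
      unfolding C_def by (simp add: mult.assoc[symmetric] mult_right_mono)
    finally show ?thesis .
  qed
  have hm: "(\<lambda>x. \<bar>f x\<bar> powr r) \<in> borel_measurable lborel" using fm by measurable
  show ?thesis unfolding in_Lp_def
    using fm nD_fin[of e "\<lambda>x. \<bar>f x\<bar> powr r" C] hm pb rg by (simp add: e_def)
qed

theorem proposition4p5:
  fixes u v :: "'a::euclidean_space \<Rightarrow> real"
    and p q \<alpha> \<sigma>1 \<sigma>2 :: real
  defines "n \<equiv> real DIM('a)"
  assumes dim: "DIM('a) \<ge> 3"
    and pq: "p > 0" "q > 0" "p * q > 1"
    and alpha: "0 < \<alpha>" "\<alpha> < n"
    and sigma: "0 \<le> \<sigma>1" "\<sigma>1 < \<alpha>" "0 \<le> \<sigma>2" "\<sigma>2 < \<alpha>"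
    and order: "q \<ge> p" "\<sigma>1 \<ge> \<sigma>2"
    and pos: "\<And>x. u x > 0" "\<And>x. v x > 0"
    and meas: "u \<in> borel_measurable lborel" "v \<in> borel_measurable lborel"
    and eq_u: "\<And>x. ennreal (u x) =
       (\<integral>\<^sup>+ y. ennreal (v y powr q / (norm (x - y) powr (n - \<alpha>) * norm y powr \<sigma>1)) \<partial>lborel)"
    and eq_v: "\<And>x. ennreal (v x) =
       (\<integral>\<^sup>+ y. ennreal (u y powr p / (norm (x - y) powr (n - \<alpha>) * norm y powr \<sigma>2)) \<partial>lborel)"
    and exps: "q0_exp \<alpha> p q \<sigma>1 \<sigma>2 + p0_exp \<alpha> p q \<sigma>1 \<sigma>2 \<le> n - \<alpha>"
    and bdd: "bounded (range u)" "bounded (range v)"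
    and decay: "fast_decay \<alpha> p \<sigma>1 \<sigma>2 u v"
  shows "in_Lp (n / q0_exp \<alpha> p q \<sigma>1 \<sigma>2) u \<and> in_Lp (n / p0_exp \<alpha> p q \<sigma>1 \<sigma>2) v"
proof -
  define D where "D = p * q - 1"
  have D: "D > 0" using pq by (simp add: D_def)
  define P0 where "P0 = p0_exp \<alpha> p q \<sigma>1 \<sigma>2"
  define Q0 where "Q0 = q0_exp \<alpha> p q \<sigma>1 \<sigma>2"
  have P0: "P0 = (\<alpha> - \<sigma>2 + p * (\<alpha> - \<sigma>1)) / D"
    unfolding P0_def p0_exp_def D_def by (simp add: algebra_simps)
  have Q0: "Q0 = (\<alpha> - \<sigma>1 + q * (\<alpha> - \<sigma>2)) / D"
    unfolding Q0_def q0_exp_def D_def by (simp add: algebra_simps)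
  have P0pos: "P0 > 0" unfolding P0 using D pq sigma by (intro divide_pos_pos add_pos_nonneg) auto
  have Q0pos: "Q0 > 0" unfolding Q0 using D pq sigma by (intro divide_pos_pos add_pos_nonneg) auto
  have ident: "p * Q0 = P0 + \<alpha> - \<sigma>2"
  proof -
    have "p * Q0 * D = (P0 + \<alpha> - \<sigma>2) * D"
      using D unfolding P0 Q0 by (simp add: field_simps D_def)
    then show ?thesis using D by simp
  qed
  have ex: "Q0 + P0 \<le> n - \<alpha>" using exps by (simp add: P0_def Q0_def)
  have n3: "n \<ge> 3" using dim by (simp add: n_def)
  obtain Mu where Mu: "\<And>x. u x \<le> Mu" using bdd(1) unfolding bounded_iff by (metis abs_le_D1 rangeI real_norm_def)
  obtain Mv where Mv: "\<And>x. v x \<le> Mv" using bdd(2) unfolding bounded_iff by (metis abs_le_D1 rangeI real_norm_def)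
  have dec: "asymp_comparable u (\<lambda>x. norm x powr (-(n - \<alpha>)))"
     "(if p * (n - \<alpha>) + \<sigma>2 > n then asymp_comparable v (\<lambda>x. norm x powr (-(n - \<alpha>)))
       else if p * (n - \<alpha>) + \<sigma>2 = n then
         asymp_comparable v (\<lambda>x. norm x powr (-(n - \<alpha>)) * ln (norm x))
       else asymp_comparable v (\<lambda>x. norm x powr (-(p * (n - \<alpha>) - (\<alpha> - \<sigma>2)))))"
    using decay unfolding fast_decay_def Let_def n_def by auto
  have U: "in_Lp (n / Q0) u"
  proof -
    obtain c C R where CR: "\<And>x. norm x \<ge> R \<Longrightarrow> u x \<le> C * norm x powr (-(n - \<alpha>))"
      using dec(1) unfolding asymp_comparable_def by blast
    have "n / Q0 * (n - \<alpha>) > n"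
    proof -
      have "n - \<alpha> > Q0" using ex P0pos by linarith
      hence "(n - \<alpha>) / Q0 > 1" using Q0pos by simp
      hence "n * ((n - \<alpha>) / Q0) > n * 1" using n3 by (intro mult_strict_left_mono) auto
      thus ?thesis by simp
    qed
    then show ?thesis
      using decay_Lp[OF meas(1) pos(1) Mu, of "n / Q0" "n - \<alpha>" R C] Q0pos n3 alpha CR
      by (simp add: n_def)
  qed
  have V: "in_Lp (n / P0) v"
  proof -
    have key: "\<exists>\<gamma> K R. \<gamma> > P0 \<and> (\<forall>x. norm x \<ge> R \<longrightarrow> v x \<le> K * norm x powr (-\<gamma>))"
    proof (cases "p * (n - \<alpha>) + \<sigma>2 > n")
      case True
      then obtain c C R where CR: "\<And>x. norm x \<ge> R \<Longrightarrow> v x \<le> C * norm x powr (-(n - \<alpha>))"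
        using dec(2) unfolding asymp_comparable_def by auto
      moreover have "n - \<alpha> > P0" using ex Q0pos by linarith
      ultimately show ?thesis by blast
    next
      case F1: False
      show ?thesis
      proof (cases "p * (n - \<alpha>) + \<sigma>2 = n")
        case True
        then obtain c C R where CR: "\<And>x. norm x \<ge> R \<Longrightarrow> v x \<le> C * (norm x powr (-(n - \<alpha>)) * ln (norm x))"
          using dec(2) F1 unfolding asymp_comparable_def by auto
        define \<epsilon> where "\<epsilon> = (n - \<alpha> - P0) / 2"
        have eps: "\<epsilon> > 0" using ex Q0pos by (simp add: \<epsilon>_def)
        have "\<forall>x. norm x \<ge> max R 1 \<longrightarrow> v x \<le> (max C 0 / \<epsilon>) * norm x powr (-(n - \<alpha> - \<epsilon>))"
        proof (intro allI impI)
          fix x :: 'a assume xR: "norm x \<ge> max R 1"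
          hence x1: "norm x \<ge> 1" by simp
          have ln0: "ln (norm x) \<ge> 0" using x1 by simp
          have "ln (norm x) = ln (norm x powr \<epsilon>) / \<epsilon>" using eps x1 by (simp add: ln_powr)
          also have "\<dots> \<le> norm x powr \<epsilon> / \<epsilon>"
          proof (rule divide_right_mono)
            have "norm x powr \<epsilon> > 0" using x1 by (auto simp: powr_gt_zero)
            then have "ln (norm x powr \<epsilon>) \<le> norm x powr \<epsilon> - 1" by (rule ln_le_minus_one)
            then show "ln (norm x powr \<epsilon>) \<le> norm x powr \<epsilon>" by linarith
          qed (use eps in simp)
          finally have lnb: "ln (norm x) \<le> norm x powr \<epsilon> / \<epsilon>" .
          have "v x \<le> C * (norm x powr (-(n - \<alpha>)) * ln (norm x))" using CR xR by simp
          also have "\<dots> \<le> max C 0 * (norm x powr (-(n - \<alpha>)) * ln (norm x))"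
            using ln0 by (intro mult_right_mono) auto
          also have "\<dots> \<le> max C 0 * (norm x powr (-(n - \<alpha>)) * (norm x powr \<epsilon> / \<epsilon>))"
            using lnb by (intro mult_left_mono) auto
          also have "\<dots> = (max C 0 / \<epsilon>) * norm x powr (-(n - \<alpha> - \<epsilon>))"
            using x1 by (simp add: powr_add[symmetric] algebra_simps)
          finally show "v x \<le> (max C 0 / \<epsilon>) * norm x powr (-(n - \<alpha> - \<epsilon>))" .
        qed
        moreover have "n - \<alpha> - \<epsilon> > P0" using eps unfolding \<epsilon>_def by (simp add: field_simps)
        ultimately show ?thesis by blast
      next
        case False
        then obtain c C R where CR: "\<And>x. norm x \<ge> R \<Longrightarrow> v x \<le> C * norm x powr (-(p * (n - \<alpha>) - (\<alpha> - \<sigma>2)))"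
          using dec(2) F1 unfolding asymp_comparable_def by auto
        moreover have "p * (n - \<alpha>) - (\<alpha> - \<sigma>2) > P0"
        proof -
          have "p * (n - \<alpha>) \<ge> p * (Q0 + P0)" using ex pq by (intro mult_left_mono) auto
          moreover have "p * P0 > 0" using pq P0pos by simp
          ultimately show ?thesis using ident by (simp add: algebra_simps)
        qed
        ultimately show ?thesis by blast
      qed
    qed
    then obtain \<gamma> K R where g: "\<gamma> > P0" and KR: "\<And>x. norm x \<ge> R \<Longrightarrow> v x \<le> K * norm x powr (-\<gamma>)"
      by blast
    have "n / P0 * \<gamma> > n"
    proof -
      have "\<gamma> / P0 > 1" using g P0pos by simp
      hence "n * (\<gamma> / P0) > n * 1" using n3 by (intro mult_strict_left_mono) auto
      thus ?thesis by simp
    qed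
    then show ?thesis
      using decay_Lp[OF meas(2) pos(2) Mv, of "n / P0" \<gamma> R K] P0pos n3 g KR
      by (simp add: n_def)
  qed
  show ?thesis using U V by (simp add: P0_def Q0_def)
qed

end
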